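(* For each $C>0$ there is an irrational number $x=[a_0,a_1,a_2,\ldots]$ with all $a_i\in\{1,2,3,4\}$ whose sequence of partial quotients is eventually periodic with period length at least $C$, and whose Jacobi sequence is the constant sequence $1,1,1,\ldots$. Furthermore, there are uncountably many irrational numbers $x=[a_0,a_1,a_2,\ldots]$ with all $a_i\in\{1,2,3,4\}$ whose continued fraction expansion is not eventually periodic and whose Jacobi sequence is the constant sequence $1,1,1,\ldots$.
   Context: For $x\in\mathbb{R}\setminus\mathbb{Q}$ with regular continued fraction expansion $x=[a_0,a_1,a_2,\ldots]$, the convergents $s_k/t_k$ are defined by $s_{-1}=1$, $s_0=a_0$, $s_k=a_ks_{k-1}+s_{k-2}$ and $t_{-1}=0$, $t_0=1$, $t_k=a_kt_{k-1}+t_{k-2}$ for $k\ge1$. For an odd natural number $n$ and an integer $m$ coprime to $n$, $\left(\frac{m}{n}\right)$ is the usual Jacobi symbol; if $n$ is even and $\gcd(m,n)=1$, one sets $\left(\frac{m}{n}\right)=*$, a fixed symbol different from $\pm1$. The Jacobi sequence of $x$ is $\left(\frac{s_k}{t_k}\right)$, $k\ge 0$. An irrational number whose partial quotients all lie in $\{1,2,3,4\}$ is called a 4-representative. *)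

theory Defs
  imports "HOL-Analysis.Analysis" "HOL-Number_Theory.Number_Theory" "HOL-Library.Countable_Set"
begin

fun cf_rem :: "real \<Rightarrow> nat \<Rightarrow> real" where
  "cf_rem x 0 = x"
| "cf_rem x (Suc k) = 1 / (cf_rem x k - of_int \<lfloor>cf_rem x k\<rfloor>)"

definition cf :: "real \<Rightarrow> nat \<Rightarrow> int" where
  "cf x k = \<lfloor>cf_rem x k\<rfloor>"

text \<open>Numerators s_k and denominators t_k of the convergents (k \<ge> 0),
  with s_{-1} = 1, s_0 = a_0, t_{-1} = 0, t_0 = 1.\<close>
fun cnum :: "(nat \<Rightarrow> int) \<Rightarrow> nat \<Rightarrow> int" where
  "cnum a 0 = a 0"
| "cnum a (Suc 0) = a 1 * a 0 + 1"
| "cnum a (Suc (Suc k)) = a (Suc (Suc k)) * cnum a (Suc k) + cnum a k"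

fun cden :: "(nat \<Rightarrow> int) \<Rightarrow> nat \<Rightarrow> int" where
  "cden a 0 = 1"
| "cden a (Suc 0) = a 1"
| "cden a (Suc (Suc k)) = a (Suc (Suc k)) * cden a (Suc k) + cden a k"

definition Jacobi :: "int \<Rightarrow> nat \<Rightarrow> int" where
  "Jacobi m n = (\<Prod>p\<in>#prime_factorization n. Legendre m (int p))"

datatype jac_val = JStar | JVal int

definition jacobi_seq :: "real \<Rightarrow> nat \<Rightarrow> jac_val" where
  "jacobi_seq x k =
     (let s = cnum (cf x) k; t = cden (cf x) k in
      if even t then JStar else JVal (Jacobi s (nat t)))"

definition eventually_periodic_with :: "(nat \<Rightarrow> int) \<Rightarrow> nat \<Rightarrow> bool" where
  "eventually_periodic_with a p \<longleftrightarrow> p > 0 \<and> (\<exists>N. \<forall>n\<ge>N. a (n + p) = a n)"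

definition eventually_periodic :: "(nat \<Rightarrow> int) \<Rightarrow> bool" where
  "eventually_periodic a \<longleftrightarrow> (\<exists>p. eventually_periodic_with a p)"

definition period_length :: "(nat \<Rightarrow> int) \<Rightarrow> nat" where
  "period_length a = (LEAST p. eventually_periodic_with a p)"

end

theory Submission
  imports Defs
begin


lemma leg_cong: "[a = b] (mod p) \<Longrightarrow> Legendre a p = Legendre b p"
proof -
  assume h: "[a = b] (mod p)"
  have 1: "[a = 0] (mod p) = [b = 0] (mod p)" using h by (meson cong_sym cong_trans)
  have 2: "QuadRes p a = QuadRes p b" unfolding QuadRes_def using h by (meson cong_sym cong_trans)
  show ?thesis unfolding Legendre_def 1 2 ..
qed

lemma small_cong_eq:
  fixes x y :: int
  assumes "x \<in> {-1,0,1}" "y \<in> {-1,0,1}" "[x = y] (mod p)" "p > 2"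
  shows "x = y"
proof -
  have "p dvd (x - y)" using assms(3) by (simp add: cong_iff_dvd_diff)
  moreover have "\<bar>x - y\<bar> < p" using assms(1,2,4) by auto
  ultimately show ?thesis
  proof (cases "x = y")
    case False
    then have "\<bar>p\<bar> \<le> \<bar>x - y\<bar>" using dvd_imp_le_int \<open>p dvd (x - y)\<close> by simp
    then show ?thesis using \<open>\<bar>x - y\<bar> < p\<close> by simp
  qed
qed

lemma leg_range: "Legendre a p \<in> {-1,0,1}"
  unfolding Legendre_def by auto

lemma leg_mult:
  assumes "prime p" "2 < p"
  shows "Legendre (a*b) (int p) = Legendre a (int p) * Legendre b (int p)"
proof -
  have X: "[Legendre (a*b) (int p) = a ^ ((p - 1) div 2) * b ^ ((p - 1) div 2)] (mod int p)"
    using euler_criterion[OF assms, of "a*b"] by (simp add: power_mult_distrib)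
  have Y: "[Legendre a (int p) * Legendre b (int p) = a ^ ((p - 1) div 2) * b ^ ((p - 1) div 2)] (mod int p)"
    using euler_criterion[OF assms] cong_mult by blast
  have Z: "[Legendre (a*b) (int p) = Legendre a (int p) * Legendre b (int p)] (mod int p)"
    using cong_trans[OF X cong_sym[OF Y]] .
  have R: "Legendre a (int p) * Legendre b (int p) \<in> {-1,0,1}"
    using leg_range[of a "int p"] leg_range[of b "int p"] by auto
  show ?thesis by (rule small_cong_eq[OF leg_range R Z]) (use assms(2) in simp)
qed

definition chi :: "int \<Rightarrow> int" where "chi n = (if n mod 4 = 1 then 1 else -1)"

lemma leg_minus1:
  assumes "prime p" "2 < p"
  shows "Legendre (-1) (int p) = chi (int p)"
proof -
  have pr: "prime (int p)" using assms by simp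
  have c: "[Legendre (-1) (int p) = (-1) ^ ((p - 1) div 2)] (mod int p)"
    using euler_criterion[OF assms] by simp
  have op: "odd p" using assms prime_odd_nat by blast
  have "(-1::int) ^ ((p - 1) div 2) = chi (int p)"
  proof (cases "int p mod 4 = 1")
    case True
    then have "p mod 4 = 1" by presburger
    then have "p = 4*(p div 4)+1" by presburger
    then obtain k where "p = 4*k+1" by blast
    then have "(p - 1) div 2 = 2 * k" by simp
    then show ?thesis using True by (simp add: chi_def)
  next
    case False
    with op have "int p mod 4 = 3" by presburger
    then have "p mod 4 = 3" by presburger
    then have "p = 4*(p div 4)+3" by presburger
    then obtain k where k: "p = 4*k+3" by blast
    then have "(p - 1) div 2 = Suc (2 * k)" by simp
    then show ?thesis using False by (simp add: chi_def)
  qed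
  with c have "[Legendre (-1) (int p) = chi (int p)] (mod int p)" by simp
  moreover have "chi (int p) \<in> {-1,0,1}" by (simp add: chi_def)
  ultimately show ?thesis using small_cong_eq[OF leg_range] assms(2) by simp
qed

lemma leg_1: "prime p \<Longrightarrow> Legendre 1 (int p) = 1"
proof -
  assume "prime p" then have "int p > 1" using prime_gt_1_nat by simp
  then have a: "\<not> [1 = 0] (mod int p)" by (simp add: cong_def)
  have b: "\<exists>y. [y^2 = 1] (mod int p)" by (rule exI[of _ 1]) simp
  show ?thesis unfolding Legendre_def QuadRes_def by (simp only: a b if_False if_True)
qed

lemma J_1: "Jacobi m 1 = 1"
  by (simp add: Jacobi_def)

lemma J_prime: "prime p \<Longrightarrow> Jacobi m p = Legendre m (int p)"
  by (simp add: Jacobi_def prime_factorization_prime)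

lemma J_mult_n: "n1 > 0 \<Longrightarrow> n2 > 0 \<Longrightarrow> Jacobi m (n1*n2) = Jacobi m n1 * Jacobi m n2"
  by (simp add: Jacobi_def prime_factorization_mult)

lemma pf_odd: "odd (n::nat) \<Longrightarrow> p \<in># prime_factorization n \<Longrightarrow> prime p \<and> 2 < p"
proof -
  assume "odd n" "p \<in># prime_factorization n"
  then have "prime p" "p dvd n" by (auto simp: in_prime_factors_iff)
  have "odd p"
  proof
    assume "even p"
    then have "2 dvd n" using \<open>p dvd n\<close> by (rule dvd_trans)
    with \<open>odd n\<close> show False by simp
  qed
  moreover have "p \<ge> 2" using prime_ge_2_nat[OF \<open>prime p\<close>] .
  ultimately show ?thesis using \<open>prime p\<close> by presburger
qed

lemma J_mult_m: "odd n \<Longrightarrow> Jacobi (a*b) n = Jacobi a n * Jacobi b n"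
proof -
  assume "odd n"
  have "(\<Prod>p\<in>#prime_factorization n. Legendre (a*b) (int p)) =
        (\<Prod>p\<in>#prime_factorization n. Legendre a (int p) * Legendre b (int p))"
    by (rule arg_cong[where f=prod_mset], rule image_mset_cong) (use pf_odd[OF \<open>odd n\<close>] leg_mult in blast)
  then show ?thesis unfolding Jacobi_def by (simp add: prod_mset.distrib)
qed

lemma J_cong: "[a = b] (mod int n) \<Longrightarrow> Jacobi a n = Jacobi b n"
proof -
  assume h: "[a = b] (mod int n)"
  have "(\<Prod>p\<in>#prime_factorization n. Legendre a (int p)) =
        (\<Prod>p\<in>#prime_factorization n. Legendre b (int p))"
  proof (rule arg_cong[where f=prod_mset], rule image_mset_cong)
    fix p assume "p \<in># prime_factorization n"
    then have "p dvd n" by (auto simp: in_prime_factors_iff)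
    then have "int p dvd int n" by simp
    then have "[a = b] (mod int p)" using h cong_dvd_modulus by blast
    then show "Legendre a (int p) = Legendre b (int p)" by (rule leg_cong)
  qed
  then show ?thesis unfolding Jacobi_def .
qed

lemma pos_induct:
  assumes "P 1" "\<And>p n. prime p \<Longrightarrow> n > 0 \<Longrightarrow> P n \<Longrightarrow> P (p*n)" "(n::nat) > 0"
  shows "P n"
  using assms(3)
proof (induction n rule: less_induct)
  case (less n)
  show ?case
  proof (cases "n = 1")
    case True then show ?thesis using assms(1) by simp
  next
    case False
    then obtain p where p: "prime p" "p dvd n" using prime_factor_nat by blast
    then obtain m where m: "n = p * m" by blast
    have "m > 0" using m less.prems by (cases m) auto
    moreover have "m < n" using m p less.prems prime_gt_1_nat by (simp add: \<open>m > 0\<close>)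
    ultimately show ?thesis using less.IH[of m] assms(2)[OF p(1)] m by blast
  qed
qed

lemma chi_mult: "odd a \<Longrightarrow> odd b \<Longrightarrow> chi (a*b) = chi a * chi b"
proof -
  assume "odd a" "odd b"
  then have "a mod 4 = 1 \<or> a mod 4 = 3" "b mod 4 = 1 \<or> b mod 4 = 3" by presburger+
  moreover have "(a*b) mod 4 = ((a mod 4) * (b mod 4)) mod 4" by (simp add: mod_mult_eq)
  ultimately show ?thesis unfolding chi_def by (elim disjE) simp_all
qed

lemma J_minus1: "odd n \<Longrightarrow> Jacobi (-1) n = chi (int n)"
proof -
  assume "odd n"
  then have "n > 0" by presburger
  have "odd n \<longrightarrow> Jacobi (-1) n = chi (int n)"
  proof (rule pos_induct[OF _ _ \<open>n > 0\<close>])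
    show "odd 1 \<longrightarrow> Jacobi (-1) 1 = chi (int 1)" by (simp add: Jacobi_def chi_def)
  next
    fix p m :: nat assume p: "prime p" "m > 0" and IH: "odd m \<longrightarrow> Jacobi (-1) m = chi (int m)"
    show "odd (p*m) \<longrightarrow> Jacobi (-1) (p*m) = chi (int (p*m))"
    proof
      assume o: "odd (p*m)"
      then have "odd p" "odd m" by auto
      then have "2 < p" using p prime_ge_2_nat by (metis le_neq_implies_less even_numeral)
      have "Jacobi (-1) (p*m) = Jacobi (-1) p * Jacobi (-1) m"
        using J_mult_n p prime_gt_0_nat by blast
      also have "\<dots> = chi (int p) * chi (int m)"
        using J_prime[OF p(1)] leg_minus1[OF p(1) \<open>2 < p\<close>] IH \<open>odd m\<close> by simp
      also have "\<dots> = chi (int (p*m))" using chi_mult \<open>odd p\<close> \<open>odd m\<close> by simp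
      finally show "Jacobi (-1) (p*m) = chi (int (p*m))" .
    qed
  qed
  then show ?thesis using \<open>odd n\<close> by blast
qed

lemma prod_ones: "(\<And>p. p \<in># M \<Longrightarrow> f p = (1::int)) \<Longrightarrow> prod_mset (image_mset f M) = 1"
  by (induction M) auto

lemma J_one: "Jacobi 1 n = 1"
  unfolding Jacobi_def
  by (rule prod_ones) (auto simp: in_prime_factors_iff leg_1)

definition sg :: "int \<Rightarrow> int \<Rightarrow> int" where
  "sg a b = (if a mod 4 = 3 \<and> b mod 4 = 3 then -1 else 1)"

lemma sg_comm: "sg a b = sg b a" unfolding sg_def by auto

lemma sg_mult1: "odd a \<Longrightarrow> odd b \<Longrightarrow> sg (a*b) c = sg a c * sg b c"
proof -
  assume "odd a" "odd b"
  then have "a mod 4 = 1 \<or> a mod 4 = 3" "b mod 4 = 1 \<or> b mod 4 = 3" by presburger+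
  moreover have "(a*b) mod 4 = ((a mod 4) * (b mod 4)) mod 4" by (simp add: mod_mult_eq)
  ultimately show ?thesis unfolding sg_def by (elim disjE) simp_all
qed

lemma sg_mult2: "odd a \<Longrightarrow> odd b \<Longrightarrow> sg c (a*b) = sg c a * sg c b"
  using sg_mult1 sg_comm by metis

lemma sg_one: "sg 1 b = 1" unfolding sg_def by simp

lemma half_odd: "odd (p::nat) \<Longrightarrow> odd ((p - 1) div 2) \<longleftrightarrow> int p mod 4 = 3"
  by presburger

lemma prime_recip:
  assumes "prime p" "2 < p" "prime q" "2 < q" "p \<noteq> q"
  shows "Legendre (int p) (int q) * Legendre (int q) (int p) = sg (int p) (int q)"
proof -
  have "odd p" "odd q" using assms prime_odd_nat by auto
  have "(-1::int) ^ ((p - 1) div 2 * ((q - 1) div 2)) = sg (int p) (int q)"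
    unfolding sg_def minus_one_power_iff even_mult_iff
    using half_odd[OF \<open>odd p\<close>] half_odd[OF \<open>odd q\<close>] by auto
  then show ?thesis using Quadratic_Reciprocity[OF assms] by simp
qed

lemma recip_D:
  assumes q: "prime q" "2 < q" and "m > 0"
  shows "odd m \<and> coprime m q \<longrightarrow> Jacobi (int m) q * Jacobi (int q) m = sg (int m) (int q)"
proof (rule pos_induct[OF _ _ \<open>m > 0\<close>])
  show "odd 1 \<and> coprime 1 q \<longrightarrow> Jacobi (int 1) q * Jacobi (int q) 1 = sg (int 1) (int q)"
    by (simp add: J_one J_1 sg_one del: of_nat_1) (simp add: Jacobi_def sg_def)
next
  fix p n :: nat assume p: "prime p" "n > 0" and IH: "odd n \<and> coprime n q \<longrightarrow> Jacobi (int n) q * Jacobi (int q) n = sg (int n) (int q)"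
  show "odd (p*n) \<and> coprime (p*n) q \<longrightarrow> Jacobi (int (p*n)) q * Jacobi (int q) (p*n) = sg (int (p*n)) (int q)"
  proof
    assume h: "odd (p*n) \<and> coprime (p*n) q"
    then have op: "odd p" "odd n" by auto
    have cp: "coprime p q" "coprime n q" using h by auto
    have "p \<noteq> q" using cp(1) q(1) by (metis coprime_self not_prime_unit)
    have "2 < p" using op(1) prime_ge_2_nat[OF p(1)] by (cases "p = 2") auto
    have oq: "odd q" using q prime_odd_nat by auto
    have "Jacobi (int (p*n)) q * Jacobi (int q) (p*n)
        = (Jacobi (int p) q * Jacobi (int n) q) * (Jacobi (int q) p * Jacobi (int q) n)"
      using J_mult_m[OF oq, of "int p" "int n"] J_mult_n[of p n "int q"] p prime_gt_0_nat by simp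
    also have "\<dots> = (Legendre (int p) (int q) * Legendre (int q) (int p)) * (Jacobi (int n) q * Jacobi (int q) n)"
      using J_prime[OF p(1)] J_prime[OF q(1)] by simp
    also have "\<dots> = sg (int p) (int q) * sg (int n) (int q)"
      using prime_recip[OF p(1) \<open>2 < p\<close> q \<open>p \<noteq> q\<close>] IH op cp by simp
    also have "\<dots> = sg (int (p*n)) (int q)" using sg_mult1[of "int p" "int n"] op by simp
    finally show "Jacobi (int (p*n)) q * Jacobi (int q) (p*n) = sg (int (p*n)) (int q)" .
  qed
qed

lemma recip:
  assumes "n > 0" "m > 0" "odd m" "odd n" "coprime m n"
  shows "Jacobi (int m) n * Jacobi (int n) m = sg (int m) (int n)"
proof -
  have "odd n \<and> coprime m n \<longrightarrow> Jacobi (int m) n * Jacobi (int n) m = sg (int m) (int n)"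
  proof (rule pos_induct[OF _ _ \<open>n > 0\<close>])
    show "odd 1 \<and> coprime m 1 \<longrightarrow> Jacobi (int m) 1 * Jacobi (int 1) m = sg (int m) (int 1)"
      by (simp add: J_one J_1 del: of_nat_1) (simp add: Jacobi_def sg_def)
  next
    fix q n :: nat assume q: "prime q" "n > 0" and IH: "odd n \<and> coprime m n \<longrightarrow> Jacobi (int m) n * Jacobi (int n) m = sg (int m) (int n)"
    show "odd (q*n) \<and> coprime m (q*n) \<longrightarrow> Jacobi (int m) (q*n) * Jacobi (int (q*n)) m = sg (int m) (int (q*n))"
    proof
      assume h: "odd (q*n) \<and> coprime m (q*n)"
      then have oq: "odd q" "odd n" by auto
      have cp: "coprime m q" "coprime m n" using h by auto
      have "2 < q" using oq(1) prime_ge_2_nat[OF q(1)] by (cases "q = 2") auto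
      have "Jacobi (int m) (q*n) * Jacobi (int (q*n)) m
          = (Jacobi (int m) q * Jacobi (int q) m) * (Jacobi (int m) n * Jacobi (int n) m)"
        using J_mult_m[OF \<open>odd m\<close>, of "int q" "int n"] J_mult_n[of q n "int m"] q prime_gt_0_nat by simp
      also have "\<dots> = sg (int m) (int q) * sg (int m) (int n)"
        using recip_D[OF q(1) \<open>2 < q\<close> \<open>m > 0\<close>] IH oq cp \<open>odd m\<close> by simp
      also have "\<dots> = sg (int m) (int (q*n))" using sg_mult2[of "int q" "int n"] oq by simp
      finally show "Jacobi (int m) (q*n) * Jacobi (int (q*n)) m = sg (int m) (int (q*n))" .
    qed
  qed
  then show ?thesis using assms by blast
qed



definition A :: "(nat \<Rightarrow> bool) \<Rightarrow> nat \<Rightarrow> int" where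
  "A b n = (if n \<le> 1 then 1 else if odd n \<and> b ((n - 3) div 4) then 2 else 4)"

lemma A_range: "A b n \<in> {1,2,3,4}" unfolding A_def by auto

lemma cden_pos: "(\<And>i. a i \<ge> 1) \<Longrightarrow> cden a k \<ge> 1"
proof (induction a k rule: cden.induct)
  case (3 a k)
  have "1 * 1 \<le> a (Suc (Suc k)) * cden a (Suc k)"
    using 3 by (intro mult_mono) (auto intro: order.trans[OF zero_le_one])
  then show ?case using 3 by simp
qed auto

lemma det: "cnum a (Suc k) * cden a k - cnum a k * cden a (Suc k) = (-1)^k"
proof (induction k)
  case 0 then show ?case by simp
next
  case (Suc k)
  have "cnum a (Suc (Suc k)) * cden a (Suc k) - cnum a (Suc k) * cden a (Suc (Suc k))
      = - (cnum a (Suc k) * cden a k - cnum a k * cden a (Suc k))"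
    by (simp add: algebra_simps)
  then show ?case using Suc by simp
qed

definition f4 :: "(nat \<Rightarrow> bool) \<Rightarrow> nat \<Rightarrow> int" where
  "f4 b k = (if k mod 4 = 3 \<and> b ((k - 3) div 4) then 3 else 1)"

lemma f4_step: "f4 b (Suc (Suc j)) = (A b (Suc (Suc j)) * f4 b (Suc j) + f4 b j) mod 4"
proof -
  obtain i r where jr: "j = 4*i + r" "r < 4" by (metis div_mult_mod_eq mod_less_divisor zero_less_numeral add.commute mult.commute)
  then have "r = 0 \<or> r = 1 \<or> r = 2 \<or> r = 3" by auto
  then show ?thesis
  proof (elim disjE)
    assume "r = 0"
    then have "Suc (Suc j) mod 4 = 2" "Suc j mod 4 = 1" "j mod 4 = 0"
      "even (Suc (Suc j))" "Suc (Suc j) > 1" using jr by presburger+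
    then show ?thesis unfolding f4_def A_def by auto
  next
    assume "r = 1"
    then have "Suc (Suc j) - 3 = 4*i" "Suc (Suc j) mod 4 = 3" "Suc j mod 4 = 2" "j mod 4 = 1"
      "odd (Suc (Suc j))" using jr by presburger+
    then show ?thesis unfolding f4_def A_def by simp
  next
    assume "r = 2" 
    then have "Suc (Suc j) mod 4 = 0" "Suc j mod 4 = 3" "j mod 4 = 2"
      "even (Suc (Suc j))" "Suc (Suc j) > 1" using jr by presburger+
    then show ?thesis unfolding f4_def A_def by auto
  next
    assume "r = 3"
    then have "(Suc (Suc j) - 3) div 4 = i" "(j - 3) div 4 = i" "Suc (Suc j) mod 4 = 1" "Suc j mod 4 = 0" "j mod 4 = 3"
      "odd (Suc (Suc j))" "Suc (Suc j) > 1" using jr by presburger+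
    then show ?thesis unfolding f4_def A_def by simp
  qed
qed

lemma mod_lin: "(x*y + z) mod (m::int) = (x*(y mod m) + z mod m) mod m"
proof -
  have "(x*y + z) mod m = ((x*y) mod m + z) mod m" by (simp add: mod_add_left_eq)
  also have "\<dots> = ((x*(y mod m)) mod m + z) mod m" by (simp add: mod_mult_right_eq)
  also have "\<dots> = (x*(y mod m) + z) mod m" by (simp add: mod_add_left_eq)
  also have "\<dots> = (x*(y mod m) + z mod m) mod m" by (simp add: mod_add_right_eq)
  finally show ?thesis .
qed

lemma cden_mod4: "cden (A b) k mod 4 = f4 b k"
proof (induction k rule: less_induct)
  case (less k)
  show ?case
  proof (cases k)
    case 0 then show ?thesis by (simp add: f4_def)
  next
    case (Suc j)
    show ?thesis
    proof (cases j)
      case 0 then show ?thesis using Suc by (simp add: f4_def A_def)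
    next
      case (Suc i)
      have "cden (A b) k mod 4 = (A b (Suc (Suc i)) * (cden (A b) (Suc i) mod 4) + cden (A b) i mod 4) mod 4"
        using \<open>k = Suc j\<close> Suc mod_lin by simp
      also have "\<dots> = f4 b k" using less.IH[of "Suc i"] less.IH[of i] \<open>k = Suc j\<close> Suc f4_step by simp
      finally show ?thesis .
    qed
  qed
qed

lemma A_ge1: "A b i \<ge> 1" unfolding A_def by auto

lemma t_pos: "cden (A b) k \<ge> 1" by (rule cden_pos) (rule A_ge1)

lemma t_odd: "odd (cden (A b) k)"
proof -
  have "cden (A b) k mod 4 = 1 \<or> cden (A b) k mod 4 = 3" using cden_mod4[of b k] unfolding f4_def by auto
  then show ?thesis by presburger
qed

lemma t_coprime: "coprime (cden a k) (cden a (Suc k))"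
proof (rule coprimeI)
  fix c assume "c dvd cden a k" "c dvd cden a (Suc k)"
  then have "c dvd cnum a (Suc k) * cden a k - cnum a k * cden a (Suc k)" by simp
  then have "c dvd (-1)^k" using det[of a k] by simp
  then have "c dvd (-1)^k * (-1)^k" by (rule dvd_mult2)
  moreover have "(-1::int)^k * (-1)^k = 1" by (simp add: power_mult_distrib[symmetric])
  ultimately show "is_unit c" by simp
qed

lemma t_nat: "int (nat (cden (A b) k)) = cden (A b) k" using t_pos[of b k] by simp

lemma t_nat_odd: "odd (nat (cden (A b) k))" using t_odd[of b k] t_pos[of b k] by (simp add: even_nat_iff)

lemma t_nat_pos: "nat (cden (A b) k) > 0" using t_pos[of b k] by simp

lemma E_lemma: "Jacobi (cden (A b) k) (nat (cden (A b) (Suc k))) = 1"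
proof (induction k)
  case 0 then show ?case by (simp add: J_one)
next
  case (Suc k)
  define m where "m = nat (cden (A b) (Suc k))"
  define n where "n = nat (cden (A b) (Suc (Suc k)))"
  have cp: "coprime m n" unfolding m_def n_def
    using t_coprime[of "A b" "Suc k"] t_pos[of b "Suc k"] t_pos[of b "Suc (Suc k)"]
    by (metis coprime_int_iff t_nat)
  have R: "Jacobi (int m) n * Jacobi (int n) m = sg (int m) (int n)"
    by (rule recip[OF _ _ _ _ cp]) (simp_all only: m_def n_def t_nat_pos t_nat_odd not_False_eq_True)
  have "sg (int m) (int n) = 1"
  proof -
    have "Suc k mod 4 \<noteq> 3 \<or> Suc (Suc k) mod 4 \<noteq> 3" by presburger
    have "cden (A b) (Suc k) mod 4 \<noteq> 3 \<or> cden (A b) (Suc (Suc k)) mod 4 \<noteq> 3"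
      unfolding cden_mod4 f4_def
      using \<open>Suc k mod 4 \<noteq> 3 \<or> Suc (Suc k) mod 4 \<noteq> 3\<close> by auto
    then show ?thesis unfolding sg_def m_def n_def t_nat by auto
  qed
  moreover have "Jacobi (int n) m = Jacobi (cden (A b) k) m"
  proof (rule J_cong)
    show "[int n = cden (A b) k] (mod int m)" unfolding n_def m_def t_nat by (simp add: cong_def)
  qed
  moreover have "Jacobi (cden (A b) k) m = 1" using Suc.IH unfolding m_def .
  ultimately have "Jacobi (int m) n = 1" using R by simp
  then show ?case unfolding m_def n_def t_nat .
qed

lemma jac_lemma: "Jacobi (cnum (A b) k) (nat (cden (A b) k)) = 1"
proof (cases k)
  case 0 then show ?thesis by (simp add: Jacobi_def)
next
  case (Suc j)
  define n where "n = nat (cden (A b) (Suc j))"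
  have on: "odd n" unfolding n_def by (rule t_nat_odd)
  have "[cnum (A b) (Suc j) * cden (A b) j = (-1)^j] (mod int n)"
  proof -
    have "cnum (A b) (Suc j) * cden (A b) j = (-1)^j + cnum (A b) j * int n"
      using det[of "A b" j] unfolding n_def t_nat by simp
    then show ?thesis by (simp add: cong_def)
  qed
  then have "Jacobi (cnum (A b) (Suc j) * cden (A b) j) n = Jacobi ((-1)^j) n" by (rule J_cong)
  moreover have "Jacobi (cnum (A b) (Suc j) * cden (A b) j) n = Jacobi (cnum (A b) (Suc j)) n"
    using J_mult_m[OF on] E_lemma[of b j] unfolding n_def by simp
  moreover have "Jacobi ((-1)^j) n = 1"
  proof (cases "even j")
    case True then show ?thesis by (simp add: J_one)
  next
    case False
    then have "Suc j mod 4 \<noteq> 3" by presburger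
    from False have "Jacobi ((-1)^j) n = chi (int n)" using J_minus1[OF on] by simp
    moreover have "cden (A b) (Suc j) mod 4 = 1" using False unfolding cden_mod4 f4_def
      using \<open>Suc j mod 4 \<noteq> 3\<close> by simp
    ultimately show ?thesis unfolding n_def t_nat chi_def by simp
  qed
  ultimately show ?thesis using Suc n_def by simp
qed



fun conv :: "(nat \<Rightarrow> int) \<Rightarrow> nat \<Rightarrow> nat \<Rightarrow> real" where
  "conv a n 0 = a n"
| "conv a n (Suc m) = a n + 1 / conv a (Suc n) m"

locale bnd =
  fixes a :: "nat \<Rightarrow> int"
  assumes lo: "\<And>i. 1 \<le> a i" and hi: "\<And>i. a i \<le> 4"
begin

lemma conv_bd: "1 \<le> conv a n m \<and> conv a n m \<le> 5"
proof (induction m arbitrary: n)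
  case 0 then show ?case using lo[of n] hi[of n] by simp
next
  case (Suc m)
  have h: "1 \<le> conv a (Suc n) m" "conv a (Suc n) m \<le> 5" using Suc by auto
  then have "0 < 1 / conv a (Suc n) m" "1 / conv a (Suc n) m \<le> 1" by auto
  moreover have "(1::real) \<le> of_int (a n)" "of_int (a n) \<le> (4::real)" using lo[of n] hi[of n] by simp_all
  ultimately show ?case unfolding conv.simps by linarith
qed

lemma conv_bd2: "6/5 \<le> conv a n (Suc m)"
proof -
  have "conv a (Suc n) m \<le> 5" "conv a (Suc n) m \<ge> 1" using conv_bd by auto
  then have "1/5 \<le> 1 / conv a (Suc n) m" by (simp add: frac_le)
  moreover have "(1::real) \<le> of_int (a n)" using lo[of n] by simp
  ultimately show ?thesis unfolding conv.simps by linarith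
qed

lemma conv_diff: "\<bar>conv a n (Suc m) - conv a n m\<bar> \<le> (5/6)^m"
proof (induction m arbitrary: n)
  case 0
  have "conv a (Suc n) 0 \<ge> 1" using conv_bd by blast
  then show ?case by simp
next
  case (Suc m)
  define u where "u = conv a (Suc n) (Suc m)"
  define v where "v = conv a (Suc n) m"
  have u: "u \<ge> 6/5" unfolding u_def by (rule conv_bd2)
  have v: "v \<ge> 1" unfolding v_def using conv_bd by blast
  have d: "\<bar>u - v\<bar> \<le> (5/6)^m" unfolding u_def v_def using Suc.IH .
  have "conv a n (Suc (Suc m)) - conv a n (Suc m) = 1/u - 1/v" unfolding u_def v_def by simp
  also have "\<dots> = (v - u) / (u * v)" using u v by (simp add: field_simps)
  finally have "\<bar>conv a n (Suc (Suc m)) - conv a n (Suc m)\<bar> = \<bar>u - v\<bar> / (u * v)"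
    using u v by (simp add: abs_minus_commute)
  also have "\<dots> \<le> \<bar>u - v\<bar> / (6/5)"
  proof (rule divide_left_mono)
    show "6/5 \<le> u * v" using mult_mono[OF u v] u by simp
  qed (use u v in auto)
  also have "\<dots> \<le> (5/6)^m / (6/5)" using d by (simp add: divide_right_mono)
  also have "\<dots> = (5/6)^(Suc m)" by simp
  finally show ?case .
qed

lemma conv_convergent: "convergent (conv a n)"
proof -
  define g where "g m = conv a n (Suc m) - conv a n m" for m
  have "summable g"
  proof (rule summable_comparison_test)
    show "\<exists>N. \<forall>m\<ge>N. norm (g m) \<le> (5/6::real)^m" unfolding g_def using conv_diff by auto
    show "summable (\<lambda>m. (5/6::real)^m)" by (rule summable_geometric) simp
  qed
  then have "(\<lambda>m. conv a n 0 + (\<Sum>i<m. g i)) \<longlonglongrightarrow> conv a n 0 + suminf g"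
    by (intro tendsto_add tendsto_const summable_LIMSEQ)
  moreover have "(\<lambda>m. conv a n 0 + (\<Sum>i<m. g i)) = conv a n"
    unfolding g_def sum_lessThan_telescope[of "conv a n"] by (rule ext) simp
  ultimately show ?thesis unfolding convergent_def by auto
qed

definition y :: "nat \<Rightarrow> real" where "y n = lim (conv a n)"

lemma y_lim: "conv a n \<longlonglongrightarrow> y n"
  unfolding y_def using conv_convergent convergent_LIMSEQ_iff by blast

lemma y_bd: "1 \<le> y n \<and> y n \<le> 5"
proof
  show "1 \<le> y n" by (rule LIMSEQ_le_const[OF y_lim]) (use conv_bd in auto)
  show "y n \<le> 5" by (rule LIMSEQ_le_const2[OF y_lim]) (use conv_bd in auto)
qed

lemma y_rec: "y n = a n + 1 / y (Suc n)"
proof -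
  have "(\<lambda>m. conv a n (Suc m)) \<longlonglongrightarrow> y n" using LIMSEQ_Suc[OF y_lim] .
  moreover have "(\<lambda>m. conv a n (Suc m)) \<longlonglongrightarrow> a n + 1 / y (Suc n)"
    unfolding conv.simps
    by (intro tendsto_add tendsto_const tendsto_divide y_lim) (use y_bd[of "Suc n"] in auto)
  ultimately show ?thesis by (rule LIMSEQ_unique)
qed

lemma y_gt1: "y (Suc n) > 1"
proof -
  have "y (Suc (Suc n)) \<le> 5" "y (Suc (Suc n)) \<ge> 1" using y_bd by auto
  then have "0 < 1 / y (Suc (Suc n))" by simp
  moreover have "(1::real) \<le> of_int (a (Suc n))" using lo[of "Suc n"] by simp
  ultimately show ?thesis using y_rec[of "Suc n"] by linarith
qed

lemma y_floor: "\<lfloor>y n\<rfloor> = a n"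
proof -
  have "1 < y (Suc n)" by (rule y_gt1)
  then have "0 < 1 / y (Suc n)" "1 / y (Suc n) < 1" by auto
  then show ?thesis using y_rec[of n] by (simp add: floor_eq_iff)
qed

lemma cf_rem_y: "cf_rem (y 0) k = y k"
proof (induction k)
  case 0 then show ?case by simp
next
  case (Suc k)
  have "y (Suc k) > 1" by (rule y_gt1)
  then have "y k - of_int \<lfloor>y k\<rfloor> = 1 / y (Suc k)" using y_rec[of k] y_floor[of k] by simp
  then show ?case using Suc by simp
qed

lemma cf_y: "cf (y 0) = a"
  unfolding cf_def using cf_rem_y y_floor by (auto simp: fun_eq_iff)

end

lemma exists_cf: "(\<And>i. a i \<in> {1,2,3,4}) \<Longrightarrow> \<exists>x. cf x = a"
proof -
  assume h: "\<And>i. a i \<in> {1,2,3,4}"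
  interpret bnd a
  proof
    fix i show "1 \<le> a i" "a i \<le> 4" using h[of i] by auto
  qed
  show ?thesis using cf_y by blast
qed

lemma cf_rem_shift: "cf_rem x (Suc k) = cf_rem (cf_rem x 1) k"
  by (induction k) simp_all

lemma irrat_aux:
  assumes "(q::nat) > 0" "x = of_int p / of_nat q" "\<forall>i. cf x i \<ge> 1"
  shows False
  using assms
proof (induction q arbitrary: x p rule: less_induct)
  case (less q)
  have fl: "\<lfloor>x\<rfloor> = p div int q" using less.prems(2) floor_divide_of_int_eq[of p "int q"] by simp
  have fr: "x - of_int \<lfloor>x\<rfloor> = of_int (p mod int q) / of_nat q"
  proof -
    have "(of_int p :: real) = of_int (int q * (p div int q) + p mod int q :: int)" by simp
    then have "(of_int p :: real) = of_nat q * of_int (p div int q) + of_int (p mod int q)"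
      by (simp only: of_int_add of_int_mult of_int_of_nat_eq)
    then show ?thesis using less.prems(1,2) fl by (simp add: field_simps)
  qed
  show False
  proof (cases "p mod int q = 0")
    case True
    then have "cf_rem x 1 = 0" using fr by simp
    then have "cf x 1 = 0" by (simp add: cf_def)
    then show False using less.prems(3) by (metis not_one_le_zero)
  next
    case False
    define r where "r = nat (p mod int q)"
    have rr: "int r = p mod int q" unfolding r_def using less.prems(1) by simp
    have r: "0 < r" "r < q" using False less.prems(1) rr
      by (simp_all add: order_le_neq_trans) (metis of_nat_less_iff pos_mod_bound of_nat_0_less_iff)
    have x1: "cf_rem x 1 = of_int (int q) / of_nat r" using fr rr by simp
    have "\<forall>i. cf (cf_rem x 1) i \<ge> 1"
    proof
      fix i show "cf (cf_rem x 1) i \<ge> 1" using less.prems(3) cf_rem_shift[of x i] unfolding cf_def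
        by (metis cf_def)
    qed
    then show False using less.IH[OF r(2) r(1) x1] by blast
  qed
qed

lemma irrat: "\<forall>i. cf x i \<ge> 1 \<Longrightarrow> x \<notin> \<rat>"
proof
  assume h: "\<forall>i. cf x i \<ge> 1" "x \<in> \<rat>"
  then obtain p q where "q > 0" "x = of_int p / of_int q" by (metis Rats_cases')
  then have "nat q > 0" "x = of_int p / of_nat (nat q)" by simp_all
  then show False using irrat_aux h(1) by blast
qed



definition xb :: "(nat \<Rightarrow> bool) \<Rightarrow> real" where "xb b = (SOME x. cf x = A b)"

lemma cf_xb: "cf (xb b) = A b"
  unfolding xb_def by (rule someI_ex[OF exists_cf]) (rule A_range)

lemma good_xb: "xb b \<notin> \<rat> \<and> (\<forall>i. cf (xb b) i \<in> {1,2,3,4}) \<and> (\<forall>k. jacobi_seq (xb b) k = JVal 1)"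
proof (intro conjI allI)
  show "xb b \<notin> \<rat>" by (rule irrat) (simp add: cf_xb A_ge1)
  fix i show "cf (xb b) i \<in> {1,2,3,4}" using A_range[of b i] by (simp only: cf_xb)
next
  fix k show "jacobi_seq (xb b) k = JVal 1"
    unfolding jacobi_seq_def cf_xb Let_def using t_odd[of b k] jac_lemma[of b k] by simp
qed

lemma A_inj: "inj A"
proof (rule injI)
  fix b b' assume h: "A b = A b'"
  show "b = b'"
  proof
    fix j
    have "A b (3 + 4*j) = A b' (3 + 4*j)" using h by simp
    moreover have "(3 + 4*j - 3) div 4 = j" "odd (3 + 4*j)" "\<not> (3 + 4*j \<le> (1::nat))" by presburger+
    ultimately show "b j = b' j" unfolding A_def by (auto split: if_splits)
  qed
qed

lemma ep_repr:
  fixes f :: "nat \<Rightarrow> 'a" and n N p :: nat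
  assumes "p > 0" "\<forall>n\<ge>N. f (n + p) = f n"
  shows "f n = f (if n < N then n else N + (n - N) mod p)"
proof (induction n rule: less_induct)
  case (less n)
  show ?case
  proof (cases "n < N + p")
    case True
    then show ?thesis by (cases "n < N") auto
  next
    case False
    then have "f n = f ((n - p) + p)" by simp
    also have "\<dots> = f (n - p)" using assms(2)[rule_format, of "n - p"] False by simp
    also have "\<dots> = f (if n - p < N then n - p else N + (n - p - N) mod p)" using less.IH[of "n-p"] assms(1) False by simp
    also have "\<dots> = f (if n < N then n else N + (n - N) mod p)"
    proof -
      have "n - N = (n - p - N) + p" using False by simp
      then have "(n - N) mod p = (n - p - N) mod p" by simp
      then show ?thesis using False by auto
    qed
    finally show ?thesis .
  qed
qed

lemma countable_ep: "countable {f :: nat \<Rightarrow> int. eventually_periodic f}"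
proof -
  define G where "G = (\<lambda>(N::nat, p::nat, xs::int list). (\<lambda>n. xs ! (if n < N then n else N + (n - N) mod p)))"
  have "{f :: nat \<Rightarrow> int. eventually_periodic f} \<subseteq> range G"
  proof
    fix f :: "nat \<Rightarrow> int" assume "f \<in> {f. eventually_periodic f}"
    then obtain p N where pN: "p > 0" "\<forall>n\<ge>N. f (n + p) = f n"
      unfolding eventually_periodic_def eventually_periodic_with_def by auto
    have "f = G (N, p, map f [0..<N+p])"
    proof
      fix n
      have "(if n < N then n else N + (n - N) mod p) < N + p" using pN(1) by auto
      then show "f n = G (N, p, map f [0..<N+p]) n"
        unfolding G_def using ep_repr[OF pN, of n] by simp
    qed
    then show "f \<in> range G" by blast
  qed
  moreover have "countable (range G)" by (rule countable_image) simp
  ultimately show ?thesis by (rule countable_subset)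
qed

lemma uncountable_bool_seq: "uncountable (UNIV :: (nat \<Rightarrow> bool) set)"
proof
  assume "countable (UNIV :: (nat \<Rightarrow> bool) set)"
  then obtain f :: "nat \<Rightarrow> (nat \<Rightarrow> bool)" where "range f = UNIV"
    using uncountable_def by blast
  then obtain k where "f k = (\<lambda>n. \<not> f n n)" by (metis UNIV_I imageE)
  then show False by (metis)
qed

lemma part2: "uncountable {x::real. x \<notin> \<rat> \<and> (\<forall>i. cf x i \<in> {1,2,3,4}) \<and>
            \<not> eventually_periodic (cf x) \<and> (\<forall>k. jacobi_seq x k = JVal 1)}"
proof
  define EP where "EP = {b. eventually_periodic (A b)}"
  have "countable EP"
  proof (rule countable_image_inj_on)
    show "countable (A ` EP)" unfolding EP_def
      by (rule countable_subset[OF _ countable_ep]) auto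
    show "inj_on A EP" using A_inj by (simp add: inj_on_def inj_def)
  qed
  then have uB: "uncountable (UNIV - EP)" using uncountable_bool_seq uncountable_minus_countable by blast
  assume c: "countable {x::real. x \<notin> \<rat> \<and> (\<forall>i. cf x i \<in> {1,2,3,4}) \<and>
            \<not> eventually_periodic (cf x) \<and> (\<forall>k. jacobi_seq x k = JVal 1)}"
  have "xb ` (UNIV - EP) \<subseteq> {x::real. x \<notin> \<rat> \<and> (\<forall>i. cf x i \<in> {1,2,3,4}) \<and>
            \<not> eventually_periodic (cf x) \<and> (\<forall>k. jacobi_seq x k = JVal 1)}"
  proof
    fix x assume "x \<in> xb ` (UNIV - EP)"
    then obtain b where b: "b \<notin> EP" "x = xb b" by auto
    have "\<not> eventually_periodic (cf (xb b))" using b(1) by (simp add: cf_xb EP_def)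
    then show "x \<in> {x::real. x \<notin> \<rat> \<and> (\<forall>i. cf x i \<in> {1,2,3,4}) \<and>
            \<not> eventually_periodic (cf x) \<and> (\<forall>k. jacobi_seq x k = JVal 1)}"
      using good_xb[of b] b(2) by blast
  qed
  then have "countable (xb ` (UNIV - EP))" using c countable_subset by blast
  moreover have "inj_on xb (UNIV - EP)"
    using A_inj cf_xb by (metis inj_def inj_onI)
  ultimately have "countable (UNIV - EP)" by (rule countable_image_inj_on)
  then show False using uB by blast
qed

lemma per_4M:
  assumes "M > 0"
  shows "eventually_periodic_with (A (\<lambda>j. j mod M = 0)) (4*M)"
  unfolding eventually_periodic_with_def
proof (intro conjI exI[of _ 3] allI impI)
  show "0 < 4*M" using assms by simp
  fix n :: nat assume "3 \<le> n"
  then have "n + 4*M - 3 = (n - 3) + 4 * M" by simp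
  then have e: "(n + 4*M - 3) div 4 = (n - 3) div 4 + M" by simp
  have o: "odd (n + 4*M) = odd n" by simp
  have m: "((n - 3) div 4 + M) mod M = ((n - 3) div 4) mod M" by simp
  show "A (\<lambda>j. j mod M = 0) (n + 4*M) = A (\<lambda>j. j mod M = 0) n"
    unfolding A_def e o m using \<open>3 \<le> n\<close> by simp
qed

lemma per_min:
  assumes "M > 0" "eventually_periodic_with (A (\<lambda>j. j mod M = 0)) p"
  shows "4*M - 2 \<le> p"
proof -
  define b where "b = (\<lambda>j::nat. j mod M = 0)"
  obtain N where p: "p > 0" "\<forall>n\<ge>N. A b (n + p) = A b n"
    using assms(2) unfolding eventually_periodic_with_def b_def by auto
  define j where "j = M * (N + 1)"
  have "1 * (N+1) \<le> M * (N+1)" by (rule mult_right_mono) (use assms(1) in simp_all)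
  then have jN: "j \<ge> N" unfolding j_def by simp
  define n where "n = 5 + 4*j"
  have bj: "b j" unfolding b_def j_def by simp
  have "(n - 3) div 4 = j" "odd n" "\<not> n \<le> 1" unfolding n_def by presburger+
  then have "A b n = 2" using bj unfolding A_def by simp
  moreover have "n \<ge> N" using jN unfolding n_def by simp
  ultimately have "A b (n + p) = 2" using p(2) by simp
  then have h: "odd (n + p)" "b ((n + p - 3) div 4)" unfolding A_def by (auto split: if_splits)
  have "even p" using h(1) unfolding n_def by presburger
  then obtain r where r: "p = 2 * r" by (rule evenE)
  have "r \<ge> 1" using p(1) r by simp
  define d where "d = (r + 1) div 2"
  have "(n + p - 3) div 4 = j + d" unfolding n_def d_def r by presburger
  then have "M dvd (j + d)" using h(2) unfolding b_def by auto
  moreover have "M dvd j" unfolding j_def by simp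
  ultimately have "M dvd d" by (simp add: dvd_add_right_iff)
  moreover have "d > 0" unfolding d_def using \<open>r \<ge> 1\<close> by simp
  ultimately have "d \<ge> M" by (simp add: dvd_imp_le)
  then show ?thesis unfolding d_def r by linarith
qed

lemma part1:
  fixes C :: real
  assumes "C > 0"
  shows "\<exists>x::real. x \<notin> \<rat> \<and> (\<forall>i. cf x i \<in> {1,2,3,4}) \<and>
            eventually_periodic (cf x) \<and> real (period_length (cf x)) \<ge> C \<and>
            (\<forall>k. jacobi_seq x k = JVal 1)"
proof -
  define M where "M = nat \<lceil>C\<rceil> + 1"
  have M0: "M > 0" unfolding M_def by simp
  define b where "b = (\<lambda>j::nat. j mod M = 0)"
  define x where "x = xb b"
  have ep: "eventually_periodic_with (cf x) (4*M)" unfolding x_def cf_xb b_def using per_4M[OF M0] .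
  then have epl: "eventually_periodic_with (cf x) (period_length (cf x))"
    unfolding period_length_def by (rule LeastI)
  have "4*M - 2 \<le> period_length (cf x)"
    using per_min[OF M0] epl unfolding x_def cf_xb b_def by blast
  moreover have "C \<le> real (4*M - 2)"
  proof -
    have "C \<le> real (nat \<lceil>C\<rceil>)" by (rule real_nat_ceiling_ge)
    moreover have "4*M - 2 = 4 * nat \<lceil>C\<rceil> + 2" unfolding M_def by simp
    ultimately show ?thesis by simp
  qed
  ultimately have "C \<le> real (period_length (cf x))" by (meson of_nat_le_iff order_trans)
  moreover have "eventually_periodic (cf x)" using ep unfolding eventually_periodic_def by blast
  ultimately show ?thesis using good_xb[of b] unfolding x_def by blast
qed

theorem theorem3:
  fixes C :: real
  assumes "C > 0"
  shows "(\<exists>x::real. x \<notin> \<rat> \<and> (\<forall>i. cf x i \<in> {1,2,3,4}) \<and>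
            eventually_periodic (cf x) \<and> real (period_length (cf x)) \<ge> C \<and>
            (\<forall>k. jacobi_seq x k = JVal 1))
       \<and> uncountable {x::real. x \<notin> \<rat> \<and> (\<forall>i. cf x i \<in> {1,2,3,4}) \<and>
            \<not> eventually_periodic (cf x) \<and> (\<forall>k. jacobi_seq x k = JVal 1)}"
  using part1[OF assms] part2 by blast

end
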